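(* In an MFQST with degree bound $\phi=3$, every source has degree at most $2$. Moreover, if a source has degree $2$, then it is collinear with its two neighbours.
   Context: Let $Z=\{z_1,\dots,z_n\}\subset\mathbb{R}^2$ ($n\ge 1$) be a set of sources and $z_{BS}\in\mathbb{R}^2\setminus Z$ a sink; each source has supply $1$. A flow-dependent quadratic Steiner tree (FQST) consists of a finite set $S\subset\mathbb{R}^2$ of Steiner points and a tree $T$ with vertex set $Z\cup S\cup\{z_{BS}\}$ whose edges are directed towards $z_{BS}$. Every node other than the sink has exactly one out-edge, and the sink has none. Each edge $e$ carries a positive flow $f(e)$ such that: - at each source, the flow on its out-edge minus the total flow on its in-edges equals $1$; - at each Steiner point, the out-flow equals the total in-flow; - the sink receives total flow $n$. The cost is $L(T)=\sum_{e\in E(T)} f(e)|e|^2$. An MFQST with degree bound $\phi$ is an FQST minimising $L$ among all FQSTs (any finite $S$, any topology) in which every Steiner point has degree at least $\phi$. *)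

theory Defs
  imports "HOL-Analysis.Analysis"
begin

type_synonym pt = "real ^ 2"

text \<open>An FQST for sources Z and sink zBS is given by a finite set S of Steiner points
 (distinct from sources and sink), a parent map p (the unique out-edge of each non-sink
 node v is the edge (v, p v)), and the flow f v on the out-edge of v.\<close>

definition fqst_nodes :: "pt set \<Rightarrow> pt \<Rightarrow> pt set \<Rightarrow> pt set" where
  "fqst_nodes Z zBS S = Z \<union> S \<union> {zBS}"

definition children :: "pt set \<Rightarrow> pt set \<Rightarrow> (pt \<Rightarrow> pt) \<Rightarrow> pt \<Rightarrow> pt set" where
  "children Z S p v = {u \<in> Z \<union> S. p u = v}"

definition is_FQST ::
  "pt set \<Rightarrow> pt \<Rightarrow> pt set \<Rightarrow> (pt \<Rightarrow> pt) \<Rightarrow> (pt \<Rightarrow> real) \<Rightarrow> bool" where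
  "is_FQST Z zBS S p f \<longleftrightarrow>
     finite S \<and> S \<inter> (Z \<union> {zBS}) = {} \<and>
     (\<forall>v \<in> Z \<union> S. p v \<in> fqst_nodes Z zBS S \<and> p v \<noteq> v) \<and>
     (\<forall>v \<in> Z \<union> S. \<exists>k. (p ^^ k) v = zBS) \<and>
     (\<forall>v \<in> Z \<union> S. f v > 0) \<and>
     (\<forall>z \<in> Z. f z - (\<Sum>u \<in> children Z S p z. f u) = 1) \<and>
     (\<forall>s \<in> S. f s = (\<Sum>u \<in> children Z S p s. f u)) \<and>
     (\<Sum>u \<in> children Z S p zBS. f u) = real (card Z)"

definition fqst_cost :: "pt set \<Rightarrow> pt set \<Rightarrow> (pt \<Rightarrow> pt) \<Rightarrow> (pt \<Rightarrow> real) \<Rightarrow> real" where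
  "fqst_cost Z S p f = (\<Sum>v \<in> Z \<union> S. f v * (norm (v - p v))\<^sup>2)"

definition fqst_nbrs :: "pt set \<Rightarrow> pt \<Rightarrow> pt set \<Rightarrow> (pt \<Rightarrow> pt) \<Rightarrow> pt \<Rightarrow> pt set" where
  "fqst_nbrs Z zBS S p v = children Z S p v \<union> (if v = zBS then {} else {p v})"

definition fqst_deg :: "pt set \<Rightarrow> pt \<Rightarrow> pt set \<Rightarrow> (pt \<Rightarrow> pt) \<Rightarrow> pt \<Rightarrow> nat" where
  "fqst_deg Z zBS S p v = card (fqst_nbrs Z zBS S p v)"

definition is_MFQST ::
  "pt set \<Rightarrow> pt \<Rightarrow> nat \<Rightarrow> pt set \<Rightarrow> (pt \<Rightarrow> pt) \<Rightarrow> (pt \<Rightarrow> real) \<Rightarrow> bool" where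
  "is_MFQST Z zBS \<phi> S p f \<longleftrightarrow>
     is_FQST Z zBS S p f \<and> (\<forall>s \<in> S. fqst_deg Z zBS S p s \<ge> \<phi>) \<and>
     (\<forall>S' p' f'. is_FQST Z zBS S' p' f' \<and> (\<forall>s \<in> S'. fqst_deg Z zBS S' p' s \<ge> \<phi>)
        \<longrightarrow> fqst_cost Z S p f \<le> fqst_cost Z S' p' f')"

end

theory Submission
  imports Defs
begin

lemma least_dec:
  assumes "\<exists>k. (p ^^ k) v = zBS" and "v \<noteq> zBS"
  shows "(LEAST k. (p ^^ k) (p v) = zBS) < (LEAST k. (p ^^ k) v = zBS)"
proof -
  define m where "m = (LEAST k. (p ^^ k) v = zBS)"
  have hm: "(p ^^ m) v = zBS" unfolding m_def using assms(1) by (rule LeastI_ex)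
  then have "m \<noteq> 0" using assms(2) by (cases m) auto
  then obtain m' where m': "m = Suc m'" by (cases m) auto
  have "(p ^^ Suc m') v = zBS" using hm m' by (simp only:)
  then have "(p ^^ m') (p v) = zBS" by (simp only: funpow_Suc_right o_apply)
  then have "(LEAST k. (p ^^ k) (p v) = zBS) \<le> m'" by (rule Least_le)
  then show ?thesis using m' m_def by simp
qed

lemma reach_measure:
  fixes D :: "pt \<Rightarrow> nat"
  assumes H: "\<forall>v\<in>A. (p v \<in> A \<or> p v = zBS) \<and> (p v \<in> A \<longrightarrow> D (p v) < D v)"
  shows "v \<in> A \<Longrightarrow> \<exists>k. (p ^^ k) v = zBS"
proof (induction v rule: measure_induct_rule[where f = D])
  case (less v)
  show ?case
  proof (cases "p v = zBS")
    case True
    then have "(p ^^ 1) v = zBS" by simp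
    then show ?thesis by blast
  next
    case False
    then have "p v \<in> A" "D (p v) < D v" using H less.prems by auto
    then obtain k where "(p ^^ k) (p v) = zBS" using less.IH by blast
    then have "(p ^^ Suc k) v = zBS" by (simp only: funpow_Suc_right o_apply)
    then show ?thesis by blast
  qed
qed

lemma norm_add_sq:
  fixes x g :: pt and t :: real
  shows "(norm (x + t *\<^sub>R g))\<^sup>2 = (norm x)\<^sup>2 + 2 * t * inner x g + t\<^sup>2 * (norm g)\<^sup>2"
proof -
  have "(norm (x + t *\<^sub>R g))\<^sup>2 = inner (x + t *\<^sub>R g) (x + t *\<^sub>R g)" by (rule power2_norm_eq_inner)
  also have "\<dots> = inner x x + 2 * t * inner x g + t\<^sup>2 * inner g g"
    by (simp add: inner_add_left inner_add_right inner_commute[of g x] power2_eq_square ring_distribs)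
  finally show ?thesis by (simp add: power2_norm_eq_inner)
qed

lemma norm_shift:
  fixes a z g :: pt and t :: real
  shows "(norm (a - (z - t *\<^sub>R g)))\<^sup>2 = (norm (a - z))\<^sup>2 + 2 * t * inner (a - z) g + t\<^sup>2 * (norm g)\<^sup>2"
proof -
  have e: "a - (z - t *\<^sub>R g) = (a - z) + t *\<^sub>R g" by simp
  show ?thesis by (subst e) (rule norm_add_sq)
qed


lemma key:
  assumes M: "is_MFQST Z zBS 3 S p f" and fZ: "finite Z" and zBS: "zBS \<notin> Z"
    and z: "z \<in> Z" and Usub: "U \<subseteq> children Z S p z" and Une: "U \<noteq> {}"
  shows "(\<Sum>u\<in>U. f u *\<^sub>R (z - u)) + f z *\<^sub>R (z - p z) = 0"
proof (rule ccontr)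
  define G where "G = (\<Sum>u\<in>U. f u *\<^sub>R (z - u))"
  define q where "q = p z"
  define g where "g = G + f z *\<^sub>R (z - q)"
  assume "(\<Sum>u\<in>U. f u *\<^sub>R (z - u)) + f z *\<^sub>R (z - p z) \<noteq> 0"
  then have g0: "g \<noteq> 0" unfolding g_def G_def q_def .
  define N where "N = Z \<union> S"
  have F: "is_FQST Z zBS S p f" and degS: "\<forall>s \<in> S. fqst_deg Z zBS S p s \<ge> 3"
    and optA: "\<forall>S' p' f'. is_FQST Z zBS S' p' f' \<and> (\<forall>s \<in> S'. fqst_deg Z zBS S' p' s \<ge> 3)
        \<longrightarrow> fqst_cost Z S p f \<le> fqst_cost Z S' p' f'"
    using M unfolding is_MFQST_def by blast+
  have opt: "fqst_cost Z S p f \<le> fqst_cost Z S' p' f'"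
    if "is_FQST Z zBS S' p' f'" "\<forall>s \<in> S'. fqst_deg Z zBS S' p' s \<ge> 3" for S' p' f'
    using optA that by blast
  have finS: "finite S" and disj: "S \<inter> (Z \<union> {zBS}) = {}"
    and par0: "\<forall>v \<in> Z \<union> S. p v \<in> fqst_nodes Z zBS S \<and> p v \<noteq> v"
    and reach: "\<forall>v \<in> Z \<union> S. \<exists>k. (p ^^ k) v = zBS"
    and pos: "\<forall>v \<in> Z \<union> S. f v > 0"
    and src: "\<forall>z \<in> Z. f z - (\<Sum>u \<in> children Z S p z. f u) = 1"
    and stn: "\<forall>s \<in> S. f s = (\<Sum>u \<in> children Z S p s. f u)"
    and snk: "(\<Sum>u \<in> children Z S p zBS. f u) = real (card Z)"
    using F unfolding is_FQST_def by blast+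
  have par: "\<forall>v \<in> N. p v \<in> N \<union> {zBS} \<and> p v \<noteq> v"
    using par0 unfolding N_def fqst_nodes_def by blast
  have reach: "\<forall>v \<in> N. \<exists>k. (p ^^ k) v = zBS" using reach unfolding N_def .
  have pos: "\<forall>v \<in> N. f v > 0" using pos unfolding N_def .
  have finN: "finite N" using finS fZ N_def by auto
  have zBSN: "zBS \<notin> N" using zBS disj N_def by auto
  define d where "d v = (LEAST k. (p ^^ k) v = zBS)" for v
  have dec: "d (p v) < d v" if "v \<in> N" for v
  proof -
    have "v \<noteq> zBS" using that zBSN by blast
    moreover have "\<exists>k. (p ^^ k) v = zBS" using reach that by blast
    ultimately show ?thesis unfolding d_def by (rule least_dec[rotated])
  qed
  have no2: False if "a \<in> N" "b \<in> N" "p a = b" "p b = a" for a b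
    using dec[OF that(1)] dec[OF that(2)] that by auto
  have zN: "z \<in> N" using z N_def by auto
  have qN: "q \<in> N \<union> {zBS}" and qz: "q \<noteq> z" using par zN q_def by auto
  have chN: "children Z S p w \<subseteq> N" for w unfolding children_def N_def by auto
  have finC: "finite (children Z S p w)" for w using chN finN finite_subset by blast
  have finU: "finite U" using Usub finC finite_subset by blast
  have UN: "U \<subseteq> N" and pU: "\<forall>u\<in>U. p u = z" using Usub chN unfolding children_def by auto
  have zU: "z \<notin> U" using pU par zN by auto
  have qU: "q \<notin> U"
  proof
    assume "q \<in> U"
    then have "q \<in> N" "p q = z" using UN pU by auto
    then show False using no2[OF zN \<open>q \<in> N\<close> q_def[symmetric]] by blast
  qed
  have fz: "f z > 0" using pos zN by auto
  define B where "B = N \<union> {zBS}"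
  have finB: "finite B" using finN B_def by auto
  have inj: "inj (\<lambda>t::real. z - t *\<^sub>R g)"
  proof (rule injI)
    fix a b :: real assume "z - a *\<^sub>R g = z - b *\<^sub>R g"
    then have "a *\<^sub>R g = b *\<^sub>R g" by simp
    then show "a = b" using g0 scaleR_cancel_right by blast
  qed
  have finT: "finite ((\<lambda>t::real. z - t *\<^sub>R g) -` B)"
    using finite_vimageI[OF finB inj] .
  have "infinite ({0<..<1 / f z} - (\<lambda>t::real. z - t *\<^sub>R g) -` B)"
    using fz finT by (simp add: Diff_infinite_finite)
  then obtain t where "t \<in> {0<..<1 / f z} - (\<lambda>t::real. z - t *\<^sub>R g) -` B"
    using infinite_imp_nonempty by blast
  then have t0: "0 < t" and t1: "t < 1 / f z" and tB: "z - t *\<^sub>R g \<notin> B" by auto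
  define s where "s = z - t *\<^sub>R g"
  have sN: "s \<notin> N" and sB: "s \<noteq> zBS" using tB s_def B_def by auto
  have qs: "q \<noteq> s" using qN sN sB by auto
  have ps: "p v \<noteq> s" if "v \<in> N" for v using par that sN sB by auto
  define p' where "p' x = (if x \<in> U \<or> x = z then s else if x = s then q else p x)" for x
  define f' where "f' x = (if x = z then f z - sum f U else if x = s then f z else f x)" for x
  define S' where "S' = insert s S"
  have N': "Z \<union> S' = insert s N" unfolding S'_def N_def by auto
  have zs: "z \<noteq> s" and Us: "s \<notin> U" using zN sN UN by auto
  have p'U: "p' u = s" if "u \<in> U" for u using that p'_def by simp
  have p'z: "p' z = s" using p'_def by simp
  have p's: "p' s = q" using p'_def Us zs by simp
  have p'o: "p' v = p v" if "v \<notin> U" "v \<noteq> z" "v \<noteq> s" for v using that p'_def by simp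
  have f'z: "f' z = f z - sum f U" using f'_def by simp
  have f's: "f' s = f z" using f'_def zs by simp
  have f'o: "f' v = f v" if "v \<noteq> z" "v \<noteq> s" for v using that f'_def by simp
  have ch_s: "children Z S' p' s = insert z U"
  proof -
    have "v \<in> insert z U" if "v \<in> insert s N" "p' v = s" for v
    proof (rule ccontr)
      assume nv: "v \<notin> insert z U"
      show False
      proof (cases "v = s")
        case True then show ?thesis using that p's qs by simp
      next
        case False
        then have "v \<in> N" using that by simp
        then show ?thesis using p'o[of v] nv False that ps by auto
      qed
    qed
    moreover have "insert z U \<subseteq> insert s N" using zN UN by auto
    ultimately show ?thesis unfolding children_def N'[symmetric] using p'U p'z by auto
  qed
  have chq: "z \<in> children Z S p q" using z q_def unfolding children_def by simp
  have UchW: "U \<inter> children Z S p w = {}" if "w \<noteq> z" for w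
    using pU that unfolding children_def by auto
  have zch: "z \<notin> children Z S p w" if "w \<noteq> q" for w
    using that q_def unfolding children_def by auto
  have sch: "s \<notin> children Z S p w" for w using chN sN by auto
  have ch_w: "children Z S' p' w = (children Z S p w - U - {z}) \<union> (if w = q then {s} else {})"
    if "w \<noteq> s" for w
  proof -
    have "children Z S' p' w = {v \<in> insert s N. p' v = w}" unfolding children_def N' ..
    also have "\<dots> = {v \<in> N. v \<notin> U \<and> v \<noteq> z \<and> p v = w} \<union> (if w = q then {s} else {})"
    proof -
      have "v \<in> {v \<in> N. v \<notin> U \<and> v \<noteq> z \<and> p v = w} \<union> (if w = q then {s} else {})"
        if "v \<in> insert s N" "p' v = w" for v
      proof (cases "v = s")
        case True then show ?thesis using that p's by auto
      next
        case False
        then have vN: "v \<in> N" using that by auto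
        have "v \<notin> U" using p'U that \<open>w \<noteq> s\<close> by auto
        moreover have "v \<noteq> z" using p'z that \<open>w \<noteq> s\<close> by auto
        ultimately show ?thesis using vN p'o[of v] that False by auto
      qed
      moreover have "v \<in> insert s N \<and> p' v = w"
        if "v \<in> {v \<in> N. v \<notin> U \<and> v \<noteq> z \<and> p v = w} \<union> (if w = q then {s} else {})" for v
      proof (cases "v = s")
        case True then show ?thesis using that p's sN by (auto split: if_splits)
      next
        case False then show ?thesis using that p'o[of v] by (auto split: if_splits)
      qed
      ultimately show ?thesis by blast
    qed
    also have "\<dots> = (children Z S p w - U - {z}) \<union> (if w = q then {s} else {})"
      unfolding children_def N_def by auto
    finally show ?thesis .
  qed
  have ch_q: "children Z S' p' q = insert s (children Z S p q - {z})"
    using ch_w[OF qs] UchW[OF qz] by auto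
  have ch_z: "children Z S' p' z = children Z S p z - U"
    using ch_w[OF zs] qz zch[of z] by auto
  have ch_o: "children Z S' p' w = children Z S p w" if "w \<noteq> s" "w \<noteq> z" "w \<noteq> q" for w
    using ch_w[OF that(1)] UchW[OF that(2)] zch[OF that(3)] that by auto
  have sumU: "sum f U \<le> sum f (children Z S p z)"
    by (rule sum_mono2[OF finC Usub]) (use pos chN in \<open>auto intro: less_imp_le\<close>)
  have fzsrc: "f z = 1 + sum f (children Z S p z)" using src z by auto
  have f'z_ge: "f' z \<ge> 1" using f'z fzsrc sumU by simp
  have sum_o: "sum f' (children Z S p w - U - {z}) = sum f (children Z S p w - U - {z})" for w
    by (rule sum.cong) (use sch f'o in auto)
  have L_o: "sum f' (children Z S' p' w) = sum f (children Z S p w)" if "w \<noteq> s" "w \<noteq> z" for w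
  proof (cases "w = q")
    case True
    have "sum f' (children Z S' p' w) = f' s + sum f' (children Z S p q - {z})"
      using True ch_q finC sch by simp
    also have "sum f' (children Z S p q - {z}) = sum f (children Z S p q - {z})"
      by (rule sum.cong) (use sch f'o in auto)
    also have "f' s + \<dots> = sum f (children Z S p q)"
      using f's sum.remove[OF finC chq, of f] by simp
    finally show ?thesis using True by simp
  next
    case False
    have "sum f' (children Z S' p' w) = sum f' (children Z S p w)" using ch_o False that by simp
    also have "\<dots> = sum f (children Z S p w)"
      by (intro sum.cong refl f'o) (use sch zch[OF False] in blast)+
    finally show ?thesis .
  qed
  have L_z: "sum f' (children Z S' p' z) = sum f (children Z S p z) - sum f U"
  proof -
    have "sum f' (children Z S' p' z) = sum f (children Z S p z - U)"
      unfolding ch_z by (intro sum.cong refl f'o) (use sch zch[OF qz[symmetric]] in blast)+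
    also have "\<dots> = sum f (children Z S p z) - sum f U" by (rule sum_diff[OF finC Usub])
    finally show ?thesis .
  qed
  have sumf'U: "sum f' U = sum f U" by (intro sum.cong refl f'o) (use zU Us in blast)+
  have L_s: "sum f' (children Z S' p' s) = f z"
    unfolding ch_s using sum.insert[OF finU zU, of f'] sumf'U f'z by simp
  have nodes': "fqst_nodes Z zBS S' = insert zBS (insert s N)"
    unfolding fqst_nodes_def S'_def N_def by auto
  have h1: "finite S'" using finS S'_def by simp
  have h2: "S' \<inter> (Z \<union> {zBS}) = {}" using disj sN sB unfolding N_def S'_def by auto
  have h3: "\<forall>v\<in>Z \<union> S'. p' v \<in> fqst_nodes Z zBS S' \<and> p' v \<noteq> v"
  proof
    fix v assume "v \<in> Z \<union> S'"
    then have v: "v \<in> insert s N" using N' by simp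
    show "p' v \<in> fqst_nodes Z zBS S' \<and> p' v \<noteq> v"
    proof (cases "v \<in> U \<or> v = z")
      case True
      then have "p' v = s" using p'U p'z by auto
      moreover have "v \<in> N" using True UN zN by auto
      ultimately show ?thesis using nodes' sN by auto
    next
      case nUz: False
      show ?thesis
      proof (cases "v = s")
        case True then show ?thesis using p's qN qs nodes' by auto
      next
        case False
        then have "v \<in> N" using v by simp
        then show ?thesis using p'o[of v] nUz False par nodes' by auto
      qed
    qed
  qed
  have dz: "0 < d z" using dec[OF zN] by simp
  define D where "D v = (if v = s then 2 * d z - 1 else 2 * d v)" for v
  have h4: "\<forall>v\<in>Z \<union> S'. \<exists>k. (p' ^^ k) v = zBS"
  proof
    fix v assume v: "v \<in> Z \<union> S'"
    have H: "\<forall>v\<in>Z \<union> S'. (p' v \<in> Z \<union> S' \<or> p' v = zBS) \<and> (p' v \<in> Z \<union> S' \<longrightarrow> D (p' v) < D v)"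
    proof
      fix v assume "v \<in> Z \<union> S'"
      then have v: "v \<in> insert s N" using N' by simp
      show "(p' v \<in> Z \<union> S' \<or> p' v = zBS) \<and> (p' v \<in> Z \<union> S' \<longrightarrow> D (p' v) < D v)"
      proof (cases "v \<in> U")
        case True
        then have "p' v = s" "v \<in> N" "v \<noteq> s" "p v = z" using p'U UN sN pU by auto
        moreover have "d z < d v" using dec[OF \<open>v \<in> N\<close>] \<open>p v = z\<close> by simp
        ultimately show ?thesis using N' dz unfolding D_def by auto
      next
        case nU: False
        show ?thesis
        proof (cases "v = z")
          case True
          then show ?thesis using p'z N' dz zs unfolding D_def by auto
        next
          case nz: False
          show ?thesis
          proof (cases "v = s")
            case True
            have "q \<in> N \<Longrightarrow> d q < d z" using dec[OF zN] q_def by simp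
            then show ?thesis using True p's qN qs N' dz unfolding D_def by auto
          next
            case ns: False
            then have vN: "v \<in> N" using v by simp
            then have "p v \<in> N \<or> p v = zBS" using par by auto
            moreover have "p v \<in> N \<Longrightarrow> d (p v) < d v" using dec[OF vN] by simp
            moreover have "p v \<noteq> s" using ps[OF vN] .
            ultimately show ?thesis using p'o[OF nU nz ns] N' ns unfolding D_def by auto
          qed
        qed
      qed
    qed
    show "\<exists>k. (p' ^^ k) v = zBS" by (rule reach_measure[OF H v])
  qed
  have h5: "\<forall>v\<in>Z \<union> S'. f' v > 0"
  proof
    fix v assume "v \<in> Z \<union> S'"
    then have v: "v \<in> insert s N" using N' by simp
    show "f' v > 0"
    proof (cases "v = z")
      case True then show ?thesis using f'z_ge by simp
    next
      case False
      then show ?thesis using f's fz f'o[of v] pos v by (cases "v = s") auto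
    qed
  qed
  have h6: "\<forall>z'\<in>Z. f' z' - sum f' (children Z S' p' z') = 1"
  proof
    fix z' assume z': "z' \<in> Z"
    show "f' z' - sum f' (children Z S' p' z') = 1"
    proof (cases "z' = z")
      case True then show ?thesis using f'z L_z fzsrc by simp
    next
      case False
      have "z' \<noteq> s" using z' sN N_def by auto
      then show ?thesis using f'o[OF False] L_o[OF \<open>z' \<noteq> s\<close> False] src z' by simp
    qed
  qed
  have h7: "\<forall>w\<in>S'. f' w = sum f' (children Z S' p' w)"
  proof
    fix w assume w: "w \<in> S'"
    show "f' w = sum f' (children Z S' p' w)"
    proof (cases "w = s")
      case True then show ?thesis using f's L_s by simp
    next
      case False
      then have wS: "w \<in> S" using w S'_def by simp
      then have "w \<noteq> z" using z disj by auto
      then show ?thesis using f'o[OF _ False] L_o[OF False] stn wS by simp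
    qed
  qed
  have h8: "sum f' (children Z S' p' zBS) = real (card Z)"
  proof -
    have "zBS \<noteq> s" "zBS \<noteq> z" using sB z zBS by auto
    then show ?thesis using L_o snk by simp
  qed
  have fqst': "is_FQST Z zBS S' p' f'"
    unfolding is_FQST_def by (intro conjI h1 h2 h3 h4 h5 h6 h7 h8)
  have nb': "fqst_nbrs Z zBS S' p' w = insert (p' w) (children Z S' p' w)" if "w \<noteq> zBS" for w
    using that unfolding fqst_nbrs_def by auto
  have nb: "fqst_nbrs Z zBS S p w = insert (p w) (children Z S p w)" if "w \<noteq> zBS" for w
    using that unfolding fqst_nbrs_def by auto
  have deg': "\<forall>w\<in>S'. 3 \<le> fqst_deg Z zBS S' p' w"
  proof
    fix w assume w: "w \<in> S'"
    show "3 \<le> fqst_deg Z zBS S' p' w"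
    proof (cases "w = s")
      case True
      obtain u0 where u0: "u0 \<in> U" using Une by blast
      have "u0 \<noteq> z" "u0 \<noteq> q" using u0 zU qU by auto
      then have c3: "card {u0, z, q} = 3" using qz by auto
      have sub: "{u0, z, q} \<subseteq> insert q (insert z U)" using u0 by auto
      have "card {u0, z, q} \<le> card (insert q (insert z U))"
        by (rule card_mono[OF _ sub]) (use finU in simp)
      then show ?thesis unfolding fqst_deg_def using True nb'[OF sB] ch_s p's c3 by simp
    next
      case False
      then have wS: "w \<in> S" using w S'_def by simp
      then have wN: "w \<in> N" and wz: "w \<noteq> z" and wB: "w \<noteq> zBS" using z disj N_def by auto
      have old0: "3 \<le> fqst_deg Z zBS S p w" using degS wS by blast
      have old: "3 \<le> card (insert (p w) (children Z S p w))"
        using old0 unfolding fqst_deg_def nb[OF wB] .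
      have "card (insert (p' w) (children Z S' p' w)) = card (insert (p w) (children Z S p w))"
      proof (cases "w \<in> U")
        case True
        then have wq: "w \<noteq> q" using qU by auto
        have "children Z S' p' w = children Z S p w" using ch_o[OF False wz wq] .
        moreover have "p' w = s" "p w = z" using p'U pU True by auto
        ultimately show ?thesis using sch zch[OF wq] finC card_insert_disjoint by simp
      next
        case nU: False
        show ?thesis
        proof (cases "w = q")
          case True
          have pqz: "p q \<noteq> z"
          proof
            assume "p q = z"
            then show False using no2[OF zN _ q_def[symmetric]] wN True by blast
          qed
          have pqs: "p q \<noteq> s" using ps wN True by simp
          define A where "A = insert (p q) (children Z S p q)"
          have finA: "finite A" using finC A_def by simp
          have zA: "z \<in> A" using chq A_def by simp
          have sA: "s \<notin> A" using pqs sch A_def by simp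
          have "insert (p' w) (children Z S' p' w) = insert s (A - {z})"
            using True ch_q p'o[OF nU wz False] pqz A_def by auto
          moreover have "card (insert s (A - {z})) = card A"
            using finA zA sA card_insert_disjoint[of "A - {z}" s] card_Diff1_less[OF finA zA]
              card_Diff_singleton[OF zA] by (simp add: card_gt_0_iff)
          ultimately show ?thesis using True A_def by simp
        next
          case nq: False
          show ?thesis using ch_o[OF False wz nq] p'o[OF nU wz False] by simp
        qed
      qed
      then show ?thesis using old nb'[OF wB] unfolding fqst_deg_def by simp
    qed
  qed
  have costle: "fqst_cost Z S p f \<le> fqst_cost Z S' p' f'" by (rule opt[OF fqst' deg'])
  define A where "A v = f v * ((norm (v - s))\<^sup>2 - (norm (v - z))\<^sup>2)" for v
  define c where "c = f' z * (norm (z - s))\<^sup>2 - f z * (norm (z - q))\<^sup>2"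
  have cterm: "f' v * (norm (v - p' v))\<^sup>2 = f v * (norm (v - p v))\<^sup>2
      + (if v \<in> U then A v else 0) + (if v = z then c else 0)" if vN: "v \<in> N" for v
  proof (cases "v \<in> U")
    case True
    then have "v \<noteq> z" "v \<noteq> s" "p' v = s" "p v = z" using zU sN vN p'U pU by auto
    then show ?thesis using True f'o unfolding A_def by (simp add: algebra_simps)
  next
    case nU: False
    show ?thesis
    proof (cases "v = z")
      case True then show ?thesis using nU p'z q_def unfolding c_def by simp
    next
      case False
      have "v \<noteq> s" using vN sN by auto
      then show ?thesis using nU False p'o f'o by simp
    qed
  qed
  have cost0: "fqst_cost Z S p f = (\<Sum>v\<in>N. f v * (norm (v - p v))\<^sup>2)"
    unfolding fqst_cost_def N_def ..
  have "fqst_cost Z S' p' f' = f' s * (norm (s - p' s))\<^sup>2 + (\<Sum>v\<in>N. f' v * (norm (v - p' v))\<^sup>2)"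
    unfolding fqst_cost_def N' using sum.insert[OF finN sN] by simp
  also have "(\<Sum>v\<in>N. f' v * (norm (v - p' v))\<^sup>2) = (\<Sum>v\<in>N. f v * (norm (v - p v))\<^sup>2
      + (if v \<in> U then A v else 0) + (if v = z then c else 0))"
    by (rule sum.cong[OF refl cterm])
  also have "\<dots> = (\<Sum>v\<in>N. f v * (norm (v - p v))\<^sup>2) + (\<Sum>v\<in>N. if v \<in> U then A v else 0)
      + (\<Sum>v\<in>N. if v = z then c else 0)"
    by (simp add: sum.distrib)
  also have "(\<Sum>v\<in>N. if v \<in> U then A v else 0) = sum A U"
    using sum.inter_restrict[OF finN, of A U] UN by (simp add: Int_absorb1)
  also have "(\<Sum>v\<in>N. if v = z then c else 0) = c"
    using zN finN by simp
  finally have cost': "fqst_cost Z S' p' f' = fqst_cost Z S p f + f z * (norm (s - q))\<^sup>2 + sum A U + c"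
    using cost0 f's p's by simp
  define ng where "ng = (norm g)\<^sup>2"
  define X where "X = inner G g"
  define Y where "Y = inner (z - q) g"
  have ngpos: "ng > 0" using g0 ng_def by simp
  have XY: "X + f z * Y = ng"
    unfolding X_def Y_def ng_def g_def power2_norm_eq_inner by (simp add: inner_add_left)
  have An: "A v = f v * (2 * t * inner (v - z) g + t\<^sup>2 * ng)" for v
    unfolding A_def s_def ng_def norm_shift by simp
  have sumG: "(\<Sum>v\<in>U. f v * inner (v - z) g) = - X"
  proof -
    have "(\<Sum>v\<in>U. f v * inner (v - z) g) = inner (\<Sum>v\<in>U. f v *\<^sub>R (v - z)) g"
      by (simp add: inner_sum_left)
    also have "(\<Sum>v\<in>U. f v *\<^sub>R (v - z)) = - G"
      unfolding G_def by (simp add: sum_negf[symmetric] scaleR_diff_right)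
    finally show ?thesis unfolding X_def by simp
  qed
  have sumA: "sum A U = 2 * t * (- X) + t\<^sup>2 * ng * sum f U"
  proof -
    have "sum A U = (\<Sum>v\<in>U. 2 * t * (f v * inner (v - z) g) + t\<^sup>2 * ng * f v)"
      unfolding An by (simp add: algebra_simps)
    also have "\<dots> = 2 * t * (\<Sum>v\<in>U. f v * inner (v - z) g) + t\<^sup>2 * ng * sum f U"
      by (simp add: sum.distrib sum_distrib_left)
    finally show ?thesis using sumG by simp
  qed
  have nzs: "(norm (z - s))\<^sup>2 = t\<^sup>2 * ng"
    unfolding s_def ng_def norm_shift by simp
  have nsq: "(norm (s - q))\<^sup>2 = (norm (z - q))\<^sup>2 - 2 * t * Y + t\<^sup>2 * ng"
  proof -
    have "(norm (s - q))\<^sup>2 = (norm (q - s))\<^sup>2" by (simp add: norm_minus_commute)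
    also have "\<dots> = (norm (q - z))\<^sup>2 + 2 * t * inner (q - z) g + t\<^sup>2 * ng"
      unfolding s_def ng_def norm_shift ..
    also have "inner (q - z) g = - Y" unfolding Y_def by (simp add: inner_diff_left)
    also have "norm (q - z) = norm (z - q)" by (simp add: norm_minus_commute)
    finally show ?thesis by simp
  qed
  have delta: "fqst_cost Z S' p' f' - fqst_cost Z S p f = 2 * t * ng * (f z * t - 1)"
  proof -
    have "fqst_cost Z S' p' f' - fqst_cost Z S p f
        = f z * ((norm (z - q))\<^sup>2 - 2 * t * Y + t\<^sup>2 * ng) + (2 * t * (- X) + t\<^sup>2 * ng * sum f U)
          + ((f z - sum f U) * (t\<^sup>2 * ng) - f z * (norm (z - q))\<^sup>2)"
      using cost' nsq sumA nzs f'z unfolding c_def by simp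
    also have "\<dots> = - 2 * t * (X + f z * Y) + 2 * f z * t\<^sup>2 * ng"
      by (simp add: algebra_simps power2_eq_square)
    also have "\<dots> = 2 * t * ng * (f z * t - 1)" using XY by (simp add: algebra_simps power2_eq_square)
    finally show ?thesis .
  qed
  have "f z * t < 1" using t1 fz by (simp add: field_simps)
  then have neg: "2 * t * ng * (f z * t - 1) < 0"
    using t0 ngpos by (simp add: mult_pos_neg)
  have "0 \<le> fqst_cost Z S' p' f' - fqst_cost Z S p f" using costle by (simp only: diff_ge_0_iff_ge)
  then have "0 \<le> 2 * t * ng * (f z * t - 1)" unfolding delta .
  then show False using neg by (metis not_less)
qed


lemma fqst_no2:
  assumes F: "is_FQST Z zBS S p f" and zBS: "zBS \<notin> Z"
    and a: "a \<in> Z \<union> S" and b: "b \<in> Z \<union> S" and ab: "p a = b" and ba: "p b = a"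
  shows False
proof -
  have disj: "S \<inter> (Z \<union> {zBS}) = {}" and reach: "\<forall>v \<in> Z \<union> S. \<exists>k. (p ^^ k) v = zBS"
    using F unfolding is_FQST_def by blast+
  have an: "a \<noteq> zBS" and bn: "b \<noteq> zBS" using a b disj zBS by auto
  have ra: "\<exists>k. (p ^^ k) a = zBS" using reach a by blast
  have rb: "\<exists>k. (p ^^ k) b = zBS" using reach b by blast
  have "(LEAST k. (p ^^ k) (p a) = zBS) < (LEAST k. (p ^^ k) a = zBS)"
    by (rule least_dec[OF ra an])
  moreover have "(LEAST k. (p ^^ k) (p b) = zBS) < (LEAST k. (p ^^ k) b = zBS)"
    by (rule least_dec[OF rb bn])
  ultimately
  show False using ab ba by simp
qed

lemma three_vec:
  fixes a b c :: "'a :: ab_group_add"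
  assumes "a + c = 0" "b + c = 0" "a + b + c = 0"
  shows "c = 0"
proof -
  have "a = - c" "b = - c" using assms(1,2) by (simp_all add: add_eq_0_iff2)
  then show ?thesis using assms(3) by simp
qed

theorem mainTheorem10:
  fixes Z :: "pt set" and zBS :: pt and S :: "pt set" and p :: "pt \<Rightarrow> pt" and f :: "pt \<Rightarrow> real"
  assumes "finite Z" and "Z \<noteq> {}" and "zBS \<notin> Z"
    and "is_MFQST Z zBS 3 S p f"
  shows "\<forall>z \<in> Z. fqst_deg Z zBS S p z \<le> 2 \<and>
           (fqst_deg Z zBS S p z = 2 \<longrightarrow> collinear (insert z (fqst_nbrs Z zBS S p z)))"
proof
  fix z assume zZ: "z \<in> Z"
  have F: "is_FQST Z zBS S p f" using assms(4) unfolding is_MFQST_def by blast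
  have finS: "finite S" and par: "\<forall>v \<in> Z \<union> S. p v \<in> fqst_nodes Z zBS S \<and> p v \<noteq> v"
    and pos: "\<forall>v \<in> Z \<union> S. f v > 0"
    using F unfolding is_FQST_def by blast+
  define q where "q = p z"
  define C where "C = children Z S p z"
  have CN: "C \<subseteq> Z \<union> S" unfolding C_def children_def by auto
  have finC: "finite C" using CN finS assms(1) finite_subset by blast
  have zB: "z \<noteq> zBS" using zZ assms(3) by auto
  have qz: "q \<noteq> z" using par zZ q_def by auto
  have qC: "q \<notin> C"
  proof
    assume "q \<in> C"
    then have qN: "q \<in> Z \<union> S" and pq: "p q = z" unfolding C_def children_def by auto
    have zN: "z \<in> Z \<union> S" using zZ by simp
    show False by (rule fqst_no2[OF F assms(3) zN qN q_def[symmetric] pq])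
  qed
  have nb: "fqst_nbrs Z zBS S p z = insert q C" unfolding fqst_nbrs_def C_def q_def using zB by auto
  have deg: "fqst_deg Z zBS S p z = Suc (card C)"
    unfolding fqst_deg_def nb using finC qC by simp
  have K: "(\<Sum>u\<in>U. f u *\<^sub>R (z - u)) + f z *\<^sub>R (z - q) = 0" if "U \<subseteq> C" "U \<noteq> {}" for U
    using key[OF assms(4) assms(1) assms(3) zZ, of U] that unfolding C_def q_def by blast
  have K1: "f u *\<^sub>R (z - u) + f z *\<^sub>R (z - q) = 0" if "u \<in> C" for u
    using K[of "{u}"] that by simp
  have c1: "card C \<le> 1"
  proof (rule ccontr)
    assume "\<not> card C \<le> 1"
    then have c2: "2 \<le> card C" by simp
    then obtain u1 where u1: "u1 \<in> C" by (metis card.empty ex_in_conv not_numeral_le_zero)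
    have "card (C - {u1}) \<ge> 1" using c2 u1 finC by (simp add: card_Diff_singleton)
    then obtain u2 where u2: "u2 \<in> C - {u1}" by (metis card.empty ex_in_conv not_one_le_zero)
    have u12: "u1 \<noteq> u2" "u2 \<in> C" using u2 by auto
    have K12: "f u1 *\<^sub>R (z - u1) + f u2 *\<^sub>R (z - u2) + f z *\<^sub>R (z - q) = 0"
      using K[of "{u1, u2}"] u1 u12 by simp
    have "f z *\<^sub>R (z - q) = 0" by (rule three_vec[OF K1[OF u1] K1[OF u12(2)] K12])
    moreover have "f z > 0" using pos zZ by auto
    ultimately show False using qz by simp
  qed
  show "fqst_deg Z zBS S p z \<le> 2 \<and>
           (fqst_deg Z zBS S p z = 2 \<longrightarrow> collinear (insert z (fqst_nbrs Z zBS S p z)))"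
  proof
    show "fqst_deg Z zBS S p z \<le> 2" using deg c1 by simp
  next
    show "fqst_deg Z zBS S p z = 2 \<longrightarrow> collinear (insert z (fqst_nbrs Z zBS S p z))"
    proof
      assume "fqst_deg Z zBS S p z = 2"
      then have "card C = 1" using deg by simp
      then obtain u where Cu: "C = {u}" by (auto simp: card_1_singleton_iff)
      then have uC: "u \<in> C" by simp
      have fu: "f u > 0" using pos CN uC by auto
      have k: "f u *\<^sub>R (z - u) + f z *\<^sub>R (z - q) = 0" using K1[OF uC] .
      have e1: "f u *\<^sub>R (u - z) = f z *\<^sub>R (z - q)"
      proof -
        have "f u *\<^sub>R (u - z) = - (f u *\<^sub>R (z - u))" by (simp add: scaleR_diff_right)
        also have "f u *\<^sub>R (z - u) = - (f z *\<^sub>R (z - q))" using k by (simp only: add_eq_0_iff2)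
        also have "- (- (f z *\<^sub>R (z - q))) = f z *\<^sub>R (z - q)" by (rule minus_minus)
        finally show ?thesis .
      qed
      have "u - z = inverse (f u) *\<^sub>R (f u *\<^sub>R (u - z))" using fu by simp
      also have "\<dots> = (f z / f u) *\<^sub>R (z - q)" unfolding e1 by (simp add: divide_inverse mult.commute)
      finally have ue: "u = z + (f z / f u) *\<^sub>R (z - q)" by (simp add: algebra_simps)
      have "insert z (fqst_nbrs Z zBS S p z) = {z, q, u}" using nb Cu by auto
      moreover have "\<forall>x\<in>{z, q, u}. \<exists>c. x = z + c *\<^sub>R (z - q)"
      proof
        fix x assume "x \<in> {z, q, u}"
        then have "x = z \<or> x = q \<or> x = u" by simp
        then show "\<exists>c. x = z + c *\<^sub>R (z - q)"
        proof (elim disjE)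
          assume "x = z" then show ?thesis by (intro exI[of _ 0]) simp
        next
          assume "x = q" then show ?thesis by (intro exI[of _ "-1"]) simp
        next
          assume "x = u" then show ?thesis using ue by blast
        qed
      qed
      then have "collinear {z, q, u}" unfolding collinear_alt by blast
      ultimately show "collinear (insert z (fqst_nbrs Z zBS S p z))" by simp
    qed
  qed
qed

end
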